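(* Let $n\ge 4$ be an integer and let $QD_{2^n}=\langle a,b : a^{2^{n-1}}=b^2=1,\ bab^{-1}=a^{2^{n-2}-1}\rangle$ be the quasidihedral group of order $2^n$. Let $\Gamma_{QD_{2^n}}$ be its non-commuting graph. Then the spectrum of the distance Laplacian matrix $D^L(\Gamma_{QD_{2^n}})$ (eigenvalues counted with multiplicity, multiplicities being added if two of the listed values coincide) consists of: (a) $0$ with multiplicity $1$; (b) $2^n-2$ and $2^n$, each with multiplicity $2^{n-2}$; (c) $2^n+2^{n-1}-4$ with multiplicity $2^{n-1}-3$.
   Context: For a finite non-abelian group $G$ with centre $Z(G)$, the non-commuting graph $\Gamma_G$ is the simple undirected graph with vertex set $G\setminus Z(G)$, in which two distinct vertices $u,v$ are adjacent if and only if $uv\ne vu$. For a connected graph $H$, $d_{uv}$ denotes the length of a shortest path between $u$ and $v$; the distance matrix $D(H)$ has $(u,v)$-entry $d_{uv}$. The transmission of a vertex $v$ is $\sum_{u} d_{uv}$, and $Tr(H)$ is the diagonal matrix of vertex transmissions. The distance Laplacian matrix is $D^L(H)=Tr(H)-D(H)$. *)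

theory Defs
  imports "Jordan_Normal_Form.Char_Poly" "HOL-Library.Product_Lexorder"
begin

text \<open>Concrete model: the pair (i,j) with i < 2^(n-1), j < 2 stands for a^i b^j.
  From b a b^{-1} = a^m with m = 2^(n-2) - 1 one gets b^j a^k = a^(k m^j) b^j, hence
  (a^i b^j)(a^k b^l) = a^(i + k m^j) b^(j+l), exponents of a mod 2^(n-1), of b mod 2.\<close>

definition qd_carrier :: "nat \<Rightarrow> (nat \<times> nat) set" where
  "qd_carrier n = {(i, j). i < 2 ^ (n - 1) \<and> j < 2}"

definition qd_mult :: "nat \<Rightarrow> nat \<times> nat \<Rightarrow> nat \<times> nat \<Rightarrow> nat \<times> nat" where
  "qd_mult n x y = (case x of (i, j) \<Rightarrow> case y of (k, l) \<Rightarrow>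
      ((i + k * (2 ^ (n - 2) - 1) ^ j) mod 2 ^ (n - 1), (j + l) mod 2))"

definition centre :: "'a set \<Rightarrow> ('a \<Rightarrow> 'a \<Rightarrow> 'a) \<Rightarrow> 'a set" where
  "centre G op = {z \<in> G. \<forall>g \<in> G. op z g = op g z}"

definition nc_vertices :: "'a set \<Rightarrow> ('a \<Rightarrow> 'a \<Rightarrow> 'a) \<Rightarrow> 'a set" where
  "nc_vertices G op = G - centre G op"

definition nc_edges :: "'a set \<Rightarrow> ('a \<Rightarrow> 'a \<Rightarrow> 'a) \<Rightarrow> ('a \<times> 'a) set" where
  "nc_edges G op = {(u, v). u \<in> nc_vertices G op \<and> v \<in> nc_vertices G op \<and> u \<noteq> v
                              \<and> op u v \<noteq> op v u}"

definition nc_dist :: "'a set \<Rightarrow> ('a \<Rightarrow> 'a \<Rightarrow> 'a) \<Rightarrow> 'a \<Rightarrow> 'a \<Rightarrow> nat" where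
  "nc_dist G op u v = (LEAST k. (u, v) \<in> (nc_edges G op) ^^ k)"

definition transmission :: "'a set \<Rightarrow> ('a \<Rightarrow> 'a \<Rightarrow> 'a) \<Rightarrow> 'a \<Rightarrow> nat" where
  "transmission G op v = (\<Sum>u \<in> nc_vertices G op. nc_dist G op u v)"

text \<open>Distance Laplacian D^L = Tr - D, vertices enumerated in increasing order
  (the spectrum does not depend on the enumeration).\<close>
definition dist_laplacian :: "'a::linorder set \<Rightarrow> ('a \<Rightarrow> 'a \<Rightarrow> 'a) \<Rightarrow> real mat" where
  "dist_laplacian G op =
     (let vs = sorted_list_of_set (nc_vertices G op); m = length vs in
      mat m m (\<lambda>(i, j). (if i = j then real (transmission G op (vs ! i)) else 0)
                        - real (nc_dist G op (vs ! i) (vs ! j))))"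

end

theory Submission
  imports Defs
begin


lemma sum_nth_distinct:
  assumes "distinct xs"
  shows "(\<Sum>k = 0..<length xs. f (xs ! k)) = sum f (set xs)"
  using assms by (simp add: sum.distinct_set_conv_list sum_list_sum_nth)

lemma ut_diag: "upper_triangular (mat m m (\<lambda>(i,j). if i = j then (f i::real) else 0))"
  unfolding upper_triangular_def
proof (intro allI impI)
  fix i j assume "i < dim_row (mat m m (\<lambda>(i,j). if i = j then (f i::real) else 0))" "j < i"
  thus "mat m m (\<lambda>(i,j). if i = j then f i else 0) $$ (i, j) = 0" by simp
qed

lemma diag_diag: "diag_mat (mat m m (\<lambda>(i,j). if i = j then (f i::real) else 0)) = map f [0..<m]"
  unfolding diag_mat_def by (rule nth_equalityI) auto

lemma char_poly_eigbasis:
  fixes F p q :: "'a \<Rightarrow> 'a \<Rightarrow> real" and lam :: "'a \<Rightarrow> real"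
  assumes dist: "distinct vs"
    and M: "M = mat (length vs) (length vs) (\<lambda>(i,j). F (vs!i) (vs!j))"
    and eig: "\<And>u x. u \<in> set vs \<Longrightarrow> x \<in> set vs \<Longrightarrow> (\<Sum>y\<in>set vs. F x y * p u y) = lam u * p u x"
    and dual: "\<And>u v. u \<in> set vs \<Longrightarrow> v \<in> set vs \<Longrightarrow> (\<Sum>x\<in>set vs. q u x * p v x) = (if u = v then 1 else 0)"
  shows "char_poly M = (\<Prod>u\<in>set vs. [:- lam u, 1:])"
proof -
  define m where "m = length vs"
  define P where "P = mat m m (\<lambda>(i,j). p (vs!j) (vs!i))"
  define Q where "Q = mat m m (\<lambda>(i,j). q (vs!i) (vs!j))"
  define D where "D = mat m m (\<lambda>(i,j). if i = j then lam (vs!i) else 0)"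
  have cM: "M \<in> carrier_mat m m" using M m_def by simp
  have cP: "P \<in> carrier_mat m m" "Q \<in> carrier_mat m m" "D \<in> carrier_mat m m"
    by (auto simp: P_def Q_def D_def)
  have nth_in: "i < m \<Longrightarrow> vs ! i \<in> set vs" for i using m_def by simp
  have nth_eq: "i < m \<Longrightarrow> j < m \<Longrightarrow> (vs ! i = vs ! j) = (i = j)" for i j
    using dist m_def by (simp add: nth_eq_iff_index_eq)
  have QP: "Q * P = 1\<^sub>m m"
  proof (rule eq_matI)
    fix i j assume i: "i < dim_row (1\<^sub>m m)" and j: "j < dim_col (1\<^sub>m m)"
    have "(Q * P) $$ (i, j) = (\<Sum>k = 0..<m. q (vs!i) (vs!k) * p (vs!j) (vs!k))"
      using i j by (simp add: P_def Q_def scalar_prod_def)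
    also have "\<dots> = (\<Sum>x\<in>set vs. q (vs!i) x * p (vs!j) x)"
      using sum_nth_distinct[OF dist, of "\<lambda>x. q (vs!i) x * p (vs!j) x"] m_def by simp
    also have "\<dots> = (if i = j then 1 else 0)"
      using dual[OF nth_in nth_in, of i j] nth_eq[of i j] i j by simp
    finally show "(Q * P) $$ (i, j) = 1\<^sub>m m $$ (i, j)" using i j by simp
  qed (use cP in auto)
  have PQ: "P * Q = 1\<^sub>m m" using mat_mult_left_right_inverse[OF cP(2) cP(1) QP] .
  have MP: "M * P = P * D"
  proof (rule eq_matI)
    fix i j assume i: "i < dim_row (P * D)" and j: "j < dim_col (P * D)"
    hence i: "i < m" and j: "j < m" using cP by auto
    have "(M * P) $$ (i, j) = (\<Sum>k = 0..<m. F (vs!i) (vs!k) * p (vs!j) (vs!k))"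
      using i j by (simp add: P_def M m_def scalar_prod_def)
    also have "\<dots> = (\<Sum>x\<in>set vs. F (vs!i) x * p (vs!j) x)"
      using sum_nth_distinct[OF dist, of "\<lambda>x. F (vs!i) x * p (vs!j) x"] m_def by simp
    also have "\<dots> = lam (vs!j) * p (vs!j) (vs!i)"
      using eig[OF nth_in nth_in, of j i] i j by simp
    also have "\<dots> = (\<Sum>k = 0..<m. p (vs!k) (vs!i) * (if k = j then lam (vs!k) else 0))"
    proof -
      have "(\<Sum>k = 0..<m. p (vs!k) (vs!i) * (if k = j then lam (vs!k) else 0))
          = (\<Sum>k = 0..<m. if k = j then p (vs!k) (vs!i) * lam (vs!k) else 0)"
        by (rule sum.cong) auto
      also have "\<dots> = p (vs!j) (vs!i) * lam (vs!j)" using j by (subst sum.delta) auto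
      finally show ?thesis by simp
    qed
    also have "\<dots> = (P * D) $$ (i, j)"
      using i j by (simp add: P_def D_def scalar_prod_def)
    finally show "(M * P) $$ (i, j) = (P * D) $$ (i, j)" .
  qed (use cP cM in auto)
  have "M = M * (P * Q)" using PQ cM by simp
  also have "\<dots> = P * D * Q" using MP cM cP by (metis assoc_mult_mat)
  finally have "similar_mat M D"
    using cM cP PQ QP by (intro similar_matI[of M D P Q m]) auto
  hence "char_poly M = char_poly D" by (rule char_poly_similar)
  moreover have ut: "upper_triangular D"
    unfolding D_def by (rule ut_diag)
  moreover have "diag_mat D = map lam vs"
  proof -
    have "diag_mat D = map (\<lambda>i. lam (vs ! i)) [0..<m]" unfolding D_def by (rule diag_diag)
    also have "\<dots> = map lam vs" unfolding m_def by (rule nth_equalityI) auto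
    finally show ?thesis .
  qed
  moreover have "(\<Prod>a\<leftarrow>map lam vs. [:- a, 1:]) = (\<Prod>u\<in>set vs. [:- lam u, 1:])"
    using dist by (simp add: prod.distinct_set_conv_list o_def)
  ultimately show ?thesis using char_poly_upper_triangular[OF cP(3) ut] by simp
qed



locale ncg =
  fixes A B R :: "'a set" and pi :: "'a \<Rightarrow> 'a" and a1 b0 :: 'a
  assumes finA: "finite A" and finB: "finite B" and disj: "A \<inter> B = {}"
    and a1: "a1 \<in> A" and b0: "b0 \<in> R" and RB: "R \<subseteq> B"
    and piB: "\<And>x. x \<in> B \<Longrightarrow> pi x \<in> B"
    and pi_ne: "\<And>x. x \<in> B \<Longrightarrow> pi x \<noteq> x"
    and pi_pi: "\<And>x. x \<in> B \<Longrightarrow> pi (pi x) = x"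
    and R_pi: "\<And>x. x \<in> B \<Longrightarrow> (pi x \<in> R) = (x \<notin> R)"
begin

definition "V = A \<union> B"
definition "\<alpha> = real (card A)"
definition "\<beta> = real (card B)"
definition "d x y = (if x = y then 0 else if x \<in> A \<and> y \<in> A then 2
   else if x \<in> B \<and> y \<in> B \<and> y = pi x then 2 else (1::real))"
definition "T x = (if x \<in> A then 2*\<alpha>+\<beta>-2 else \<alpha>+\<beta>)"
definition "F x y = (if x = y then T x else 0) - d x y"
definition "SA g = (\<Sum>x\<in>A. g x)"
definition "SB g = (\<Sum>x\<in>B. g x)"
definition "e a x = (if x = a then 1 else (0::real))"
definition "iA x = (if x \<in> A then 1 else (0::real))"
definition "iB x = (if x \<in> B then 1 else (0::real))"

lemma finV: "finite V" using finA finB V_def by simp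
lemma alpha_pos: "\<alpha> > 0" using a1 finA \<alpha>_def card_gt_0_iff by force
lemma beta_pos: "\<beta> > 0" using b0 RB finB \<beta>_def card_gt_0_iff by force
lemma b0B: "b0 \<in> B" using b0 RB by auto
lemma notAB: "x \<in> B \<Longrightarrow> x \<notin> A" using disj by auto
lemma notBA: "x \<in> A \<Longrightarrow> x \<notin> B" using disj by auto
lemma pi_eq: "x \<in> B \<Longrightarrow> y \<in> B \<Longrightarrow> (pi x = y) = (x = pi y)"
  using pi_pi by metis
lemma pi_inj: "x \<in> B \<Longrightarrow> y \<in> B \<Longrightarrow> (pi x = pi y) = (x = y)"
  using pi_pi by metis

lemma sum_union: "(\<Sum>x\<in>V. g x) = SA g + SB g"
  unfolding V_def SA_def SB_def by (rule sum.union_disjoint) (use finA finB disj in auto)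

lemma sum_delta_in: "finite S \<Longrightarrow> (\<Sum>x\<in>S. (if x = a then c else 0)) = (if a \<in> S then c else (0::real))"
  by (simp add: sum.delta')

lemma sumF:
  assumes x: "x \<in> V"
  shows "(\<Sum>y\<in>V. F x y * g y) = (if x \<in> A then (2*\<alpha>+\<beta>) * g x - 2 * SA g - SB g
      else (\<alpha>+\<beta>+1) * g x - g (pi x) - SA g - SB g)"
proof (cases "x \<in> A")
  case True
  have "(\<Sum>y\<in>A. F x y * g y) = (\<Sum>y\<in>A. (if y = x then (2*\<alpha>+\<beta>) * g x else 0) - 2 * g y)"
    by (rule sum.cong) (auto simp: F_def d_def T_def True algebra_simps)
  also have "\<dots> = (2*\<alpha>+\<beta>) * g x - 2 * SA g"
    using finA True by (simp add: sum_subtractf sum_delta_in SA_def sum_distrib_left)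
  finally have 1: "(\<Sum>y\<in>A. F x y * g y) = (2*\<alpha>+\<beta>) * g x - 2 * SA g" .
  have "(\<Sum>y\<in>B. F x y * g y) = (\<Sum>y\<in>B. - g y)"
    by (rule sum.cong) (auto simp: F_def d_def T_def True notBA notAB)
  also have "\<dots> = - SB g" by (simp add: SB_def sum_negf)
  finally have 2: "(\<Sum>y\<in>B. F x y * g y) = - SB g" .
  show ?thesis using 1 2 True sum_union[of "\<lambda>y. F x y * g y"] unfolding SA_def SB_def by simp
next
  case False
  hence xB: "x \<in> B" using x V_def by auto
  have "(\<Sum>y\<in>A. F x y * g y) = (\<Sum>y\<in>A. - g y)"
    by (rule sum.cong) (auto simp: F_def d_def T_def xB notBA notAB)
  also have "\<dots> = - SA g" by (simp add: SA_def sum_negf)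
  finally have 1: "(\<Sum>y\<in>A. F x y * g y) = - SA g" .
  have "(\<Sum>y\<in>B. F x y * g y) = (\<Sum>y\<in>B. ((if y = x then (\<alpha>+\<beta>+1) * g x else 0)
           - (if y = pi x then g (pi x) else 0)) - g y)"
    by (rule sum.cong) (auto simp: F_def d_def T_def xB notBA notAB pi_ne[OF xB] pi_ne[OF xB, symmetric] algebra_simps)
  also have "\<dots> = (\<alpha>+\<beta>+1) * g x - g (pi x) - SB g"
    using finB xB piB[OF xB] by (simp add: sum_subtractf sum_delta_in SB_def)
  finally have 2: "(\<Sum>y\<in>B. F x y * g y) = (\<alpha>+\<beta>+1) * g x - g (pi x) - SB g" .
  show ?thesis using 1 2 False sum_union[of "\<lambda>y. F x y * g y"] unfolding SA_def SB_def by simp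
qed

lemma d_sym: "x \<in> V \<Longrightarrow> y \<in> V \<Longrightarrow> d x y = d y x"
  unfolding d_def V_def using pi_eq by auto

lemma sum_d: assumes x: "x \<in> V" shows "(\<Sum>y\<in>V. d y x) = T x"
proof -
  have "(\<Sum>y\<in>V. F x y * 1) = T x - (\<Sum>y\<in>V. d x y)"
    using finV x by (simp add: F_def sum_subtractf sum_delta_in[of V x] cong: if_cong)
  moreover have "(\<Sum>y\<in>V. F x y * 1) = 0"
    unfolding sumF[OF x] SA_def SB_def using \<alpha>_def \<beta>_def by simp
  moreover have "(\<Sum>y\<in>V. d y x) = (\<Sum>y\<in>V. d x y)"
    by (rule sum.cong) (use d_sym x in auto)
  ultimately show ?thesis by simp
qed

definition "p u x = (if u = a1 then 1
   else if u \<in> A then e u x - e a1 x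
   else if u = b0 then \<beta> * iA x - \<alpha> * iB x
   else if u \<in> R then e u x + e (pi u) x - e b0 x - e (pi b0) x
   else e (pi u) x - e u x)"
definition "q u x = (if u = a1 then 1/(\<alpha>+\<beta>)
   else if u \<in> A then e u x - iA x / \<alpha>
   else if u = b0 then (iA x / \<alpha> - iB x / \<beta>) / (\<alpha>+\<beta>)
   else if u \<in> R then (e u x + e (pi u) x) / 2 - iB x / \<beta>
   else (e (pi u) x - e u x) / 2)"
definition "lam u = (if u = a1 then 0 else if u \<in> A then 2*\<alpha>+\<beta>
   else if u = b0 then \<alpha>+\<beta> else if u \<in> R then \<alpha>+\<beta> else \<alpha>+\<beta>+2)"

lemma SA_e: "SA (e a) = (if a \<in> A then 1 else 0)"
  unfolding SA_def e_def using finA by (simp add: sum.delta')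
lemma SB_e: "SB (e a) = (if a \<in> B then 1 else 0)"
  unfolding SB_def e_def using finB by (simp add: sum.delta')
lemma SA_iA: "SA iA = \<alpha>" unfolding SA_def iA_def \<alpha>_def by simp
lemma SB_iB: "SB iB = \<beta>" unfolding SB_def iB_def \<beta>_def by simp
lemma SA_iB: "SA iB = 0" unfolding SA_def iB_def using notBA by simp
lemma SB_iA: "SB iA = 0" unfolding SB_def iA_def using notAB by simp
lemma SA_1: "SA (\<lambda>_. 1) = \<alpha>" unfolding SA_def \<alpha>_def by simp
lemma SB_1: "SB (\<lambda>_. 1) = \<beta>" unfolding SB_def \<beta>_def by simp

lemma SA_p: assumes "u \<in> V" shows "SA (p u) = (if u = a1 then \<alpha> else if u \<in> A then 0 else if u = b0 then \<beta> * \<alpha> else 0)"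
proof -
  have "SA (p u) = (if u = a1 then SA (\<lambda>_. 1) else if u \<in> A then SA (e u) - SA (e a1)
     else if u = b0 then \<beta> * SA iA - \<alpha> * SA iB
     else if u \<in> R then SA (e u) + SA (e (pi u)) - SA (e b0) - SA (e (pi b0))
     else SA (e (pi u)) - SA (e u))"
    unfolding p_def SA_def by (simp add: sum_subtractf sum.distrib sum_distrib_left)
  also have "\<dots> = (if u = a1 then \<alpha> else if u \<in> A then 0 else if u = b0 then \<beta> * \<alpha> else 0)"
    using assms V_def a1 b0B piB[OF b0B] RB notBA notAB piB
    by (auto simp: SA_e SA_iA SA_iB SA_1)
  finally show ?thesis .
qed

lemma SB_p: assumes "u \<in> V"
  shows "SB (p u) = (if u = a1 then \<beta> else if u \<in> A then 0 else if u = b0 then - \<alpha> * \<beta> else 0)"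
proof -
  have "SB (p u) = (if u = a1 then SB (\<lambda>_. 1) else if u \<in> A then SB (e u) - SB (e a1)
     else if u = b0 then \<beta> * SB iA - \<alpha> * SB iB
     else if u \<in> R then SB (e u) + SB (e (pi u)) - SB (e b0) - SB (e (pi b0))
     else SB (e (pi u)) - SB (e u))"
    unfolding p_def SB_def by (simp add: sum_subtractf sum.distrib sum_distrib_left)
  also have "\<dots> = (if u = a1 then \<beta> else if u \<in> A then 0 else if u = b0 then - \<alpha> * \<beta> else 0)"
    using assms a1 b0B piB[OF b0B] RB notBA notAB piB V_def
    by (auto simp: SB_e SB_iA SB_iB SB_1)
  finally show ?thesis .
qed

lemma p_a1: "p a1 x = 1" unfolding p_def by simp
lemma p_A: "u \<in> A \<Longrightarrow> u \<noteq> a1 \<Longrightarrow> p u x = e u x - e a1 x" unfolding p_def by simp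
lemma p_b0: "p b0 x = \<beta> * iA x - \<alpha> * iB x" unfolding p_def using a1 b0B notBA by auto
lemma p_R: "u \<in> R \<Longrightarrow> u \<noteq> b0 \<Longrightarrow> p u x = e u x + e (pi u) x - e b0 x - e (pi b0) x"
  unfolding p_def using RB notBA a1 by auto
lemma p_BR: "u \<in> B \<Longrightarrow> u \<notin> R \<Longrightarrow> p u x = e (pi u) x - e u x"
  unfolding p_def using b0 notBA a1 by auto
lemma lam_simps: "lam a1 = 0" "u \<in> A \<Longrightarrow> u \<noteq> a1 \<Longrightarrow> lam u = 2*\<alpha>+\<beta>" "lam b0 = \<alpha>+\<beta>"
  "u \<in> R \<Longrightarrow> u \<noteq> b0 \<Longrightarrow> lam u = \<alpha>+\<beta>" "u \<in> B \<Longrightarrow> u \<notin> R \<Longrightarrow> lam u = \<alpha>+\<beta>+2"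
  unfolding lam_def using a1 b0 b0B notBA RB by auto

lemma eig: assumes u: "u \<in> V" and x: "x \<in> V"
  shows "(\<Sum>y\<in>V. F x y * p u y) = lam u * p u x"
proof -
  have xAB: "x \<in> A \<or> x \<in> B" using x V_def by auto
  note S = sumF[OF x] SA_p[OF u] SB_p[OF u]
  consider (ca1) "u = a1" | (cA) "u \<in> A" "u \<noteq> a1" | (cb0) "u = b0" | (cR) "u \<in> R" "u \<noteq> b0"
    | (BR) "u \<in> B" "u \<notin> R" using u V_def by auto
  then show ?thesis
  proof cases
    case ca1
    show ?thesis
    proof (cases "x \<in> A")
      case True
      then show ?thesis unfolding S using ca1 lam_simps(1) by (simp add: p_a1)
    next
      case False
      then show ?thesis unfolding S using ca1 lam_simps(1) by (simp add: p_a1)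
    qed
  next
    case cA
    have uB: "u \<notin> B" using cA notBA by auto
    show ?thesis
    proof (cases "x \<in> A")
      case True
      have "\<not> (u = b0)" using uB b0B by auto
      then show ?thesis unfolding S using cA lam_simps(2)[OF cA] True by (simp add: p_A[OF cA] algebra_simps)
    next
      case False
      hence xB: "x \<in> B" using xAB by auto
      hence "x \<noteq> u" "x \<noteq> a1" "pi x \<noteq> u" "pi x \<noteq> a1" using piB[OF xB] notBA cA a1 by auto
      then show ?thesis unfolding S using cA lam_simps(2)[OF cA] False uB b0B
        by (simp add: p_A[OF cA] e_def)
    qed
  next
    case cb0
    have nA: "b0 \<noteq> a1" "b0 \<notin> A" using b0B notBA a1 by auto
    show ?thesis
    proof (cases "x \<in> A")
      case True
      then show ?thesis unfolding S using cb0 nA lam_simps(3) notBA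
        by (simp add: p_b0 iA_def iB_def algebra_simps)
    next
      case False
      hence xB: "x \<in> B" using xAB by auto
      hence "pi x \<in> B" "pi x \<notin> A" using piB notAB by auto
      then show ?thesis unfolding S using cb0 nA lam_simps(3) xB False
        by (simp add: p_b0 iA_def iB_def algebra_simps)
    qed
  next
    case cR
    have uB: "u \<in> B" using cR RB by auto
    have nA: "u \<noteq> a1" "u \<notin> A" using uB notBA a1 by auto
    show ?thesis
    proof (cases "x \<in> A")
      case True
      hence "x \<noteq> u" "x \<noteq> pi u" "x \<noteq> b0" "x \<noteq> pi b0" using uB piB[OF uB] b0B piB[OF b0B] notAB by auto
      then show ?thesis unfolding S using cR nA lam_simps(4)[OF cR] True
        by (simp add: p_R[OF cR] e_def)
    next
      case False
      hence xB: "x \<in> B" using xAB by auto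
      have eqs: "(pi x = u) = (x = pi u)" "(pi x = pi u) = (x = u)" "(pi x = b0) = (x = pi b0)"
        "(pi x = pi b0) = (x = b0)" using pi_eq[OF xB uB] pi_inj[OF xB uB] pi_eq[OF xB b0B] pi_inj[OF xB b0B] by auto
      have "e u (pi x) + e (pi u) (pi x) - e b0 (pi x) - e (pi b0) (pi x)
          = e u x + e (pi u) x - e b0 x - e (pi b0) x"
        unfolding e_def eqs by simp
      then show ?thesis unfolding S using cR nA lam_simps(4)[OF cR] False
        by (simp add: p_R[OF cR] algebra_simps)
    qed
  next
    case BR
    have nA: "u \<noteq> a1" "u \<notin> A" "u \<noteq> b0" using BR notBA a1 b0 by auto
    show ?thesis
    proof (cases "x \<in> A")
      case True
      hence "x \<noteq> u" "x \<noteq> pi u" using BR piB notAB by auto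
      then show ?thesis unfolding S using BR nA lam_simps(5)[OF BR] True
        by (simp add: p_BR[OF BR] e_def)
    next
      case False
      hence xB: "x \<in> B" using xAB by auto
      have eqs: "(pi x = u) = (x = pi u)" "(pi x = pi u) = (x = u)"
        using pi_eq[OF xB BR(1)] pi_inj[OF xB BR(1)] by auto
      have "e (pi u) (pi x) - e u (pi x) = - (e (pi u) x - e u x)"
        unfolding e_def eqs using pi_ne[OF BR(1)] by auto
      then show ?thesis unfolding S using BR nA lam_simps(5)[OF BR] False
        by (simp add: p_BR[OF BR] algebra_simps)
    qed
  qed
qed

lemma S_e: "a \<in> V \<Longrightarrow> (\<Sum>x\<in>V. e a x * g x) = g a"
  unfolding e_def using finV by (simp add: if_distrib[of "\<lambda>t. t * _"] sum.delta' cong: if_cong)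
lemma S_iA: "(\<Sum>x\<in>V. iA x * g x) = SA g"
  unfolding sum_union SA_def SB_def iA_def using notBA notAB by simp
lemma S_iB: "(\<Sum>x\<in>V. iB x * g x) = SB g"
  unfolding sum_union SA_def SB_def iB_def using notBA by simp

lemma Q_a1: "(\<Sum>x\<in>V. q a1 x * g x) = (SA g + SB g) / (\<alpha>+\<beta>)"
  unfolding q_def sum_union SA_def SB_def by (simp add: add_divide_distrib sum_divide_distrib)
lemma Q_A: assumes "u \<in> A" "u \<noteq> a1" shows "(\<Sum>x\<in>V. q u x * g x) = g u - SA g / \<alpha>"
proof -
  have uV: "u \<in> V" using assms V_def by auto
  have "(\<Sum>x\<in>V. q u x * g x) = (\<Sum>x\<in>V. e u x * g x - (iA x * g x) / \<alpha>)"
    by (rule sum.cong) (use assms in \<open>auto simp: q_def algebra_simps\<close>)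
  also have "\<dots> = g u - SA g / \<alpha>"
    using uV by (simp add: sum_subtractf S_e S_iA flip: sum_divide_distrib)
  finally show ?thesis .
qed
lemma Q_b0: "(\<Sum>x\<in>V. q b0 x * g x) = (SA g / \<alpha> - SB g / \<beta>) / (\<alpha>+\<beta>)"
proof -
  have "(\<Sum>x\<in>V. q b0 x * g x) = (\<Sum>x\<in>V. ((iA x * g x) / \<alpha> - (iB x * g x) / \<beta>) / (\<alpha>+\<beta>))"
    by (rule sum.cong) (use b0B notBA a1 in \<open>auto simp: q_def algebra_simps\<close>)
  also have "\<dots> = (SA g / \<alpha> - SB g / \<beta>) / (\<alpha>+\<beta>)"
    by (simp add: sum_subtractf S_iA S_iB flip: sum_divide_distrib)
  finally show ?thesis .
qed
lemma Q_R: assumes "u \<in> R" "u \<noteq> b0" shows "(\<Sum>x\<in>V. q u x * g x) = (g u + g (pi u)) / 2 - SB g / \<beta>"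
proof -
  have uB: "u \<in> B" using assms RB by auto
  have uV: "u \<in> V" "pi u \<in> V" using uB piB[OF uB] V_def by auto
  have "(\<Sum>x\<in>V. q u x * g x) = (\<Sum>x\<in>V. (e u x * g x + e (pi u) x * g x) / 2 - (iB x * g x) / \<beta>)"
    by (rule sum.cong) (use assms uB notBA a1 in \<open>auto simp: q_def algebra_simps\<close>)
  also have "\<dots> = (g u + g (pi u)) / 2 - SB g / \<beta>"
    using uV by (simp add: sum_subtractf sum.distrib S_e S_iB flip: sum_divide_distrib)
  finally show ?thesis .
qed
lemma Q_BR: assumes "u \<in> B" "u \<notin> R" shows "(\<Sum>x\<in>V. q u x * g x) = (g (pi u) - g u) / 2"
proof -
  have uV: "u \<in> V" "pi u \<in> V" using assms piB[OF assms(1)] V_def by auto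
  have "(\<Sum>x\<in>V. q u x * g x) = (\<Sum>x\<in>V. (e (pi u) x * g x - e u x * g x) / 2)"
    by (rule sum.cong) (use assms b0 notBA a1 pi_ne[OF assms(1)] in \<open>auto simp: q_def e_def algebra_simps\<close>)
  also have "\<dots> = (g (pi u) - g u) / 2"
    using uV by (simp add: sum_subtractf S_e flip: sum_divide_distrib)
  finally show ?thesis .
qed

lemma dual: assumes u: "u \<in> V" and v: "v \<in> V"
  shows "(\<Sum>x\<in>V. q u x * p v x) = (if u = v then 1 else 0)"
proof -
  note SP = SA_p[OF v] SB_p[OF v]
  have ab: "\<alpha> + \<beta> \<noteq> 0" "\<alpha> \<noteq> 0" "\<beta> \<noteq> 0" using alpha_pos beta_pos by auto
  have b0n: "b0 \<noteq> a1" "b0 \<notin> A" "pi b0 \<in> B" "pi b0 \<notin> A" "pi b0 \<notin> R" "pi b0 \<noteq> b0"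
    using b0B notBA a1 piB[OF b0B] R_pi[OF b0B] b0 pi_ne[OF b0B] by auto
  consider (ca1) "u = a1" | (cA) "u \<in> A" "u \<noteq> a1" | (cb0) "u = b0" | (cR) "u \<in> R" "u \<noteq> b0"
    | (cBR) "u \<in> B" "u \<notin> R" using u V_def by auto
  then show ?thesis
  proof cases
    case ca1
    have uB: "True" by simp
    consider (da1) "v = a1" | (dA) "v \<in> A" "v \<noteq> a1" | (db0) "v = b0" | (dR) "v \<in> R" "v \<noteq> b0"
      | (dBR) "v \<in> B" "v \<notin> R" using v V_def by auto
    then show ?thesis
    proof cases
      case da1
      have vB: "True" by simp
      show ?thesis unfolding ca1 Q_a1 SP using ca1 da1 uB vB ab b0n a1 b0B pi_eq pi_inj pi_ne R_pi piB
        by (auto simp: p_a1 e_def iA_def iB_def field_simps)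
    next
      case dA
      have vB: "v \<notin> B" "v \<noteq> b0" using dA notBA b0B by auto
      show ?thesis unfolding ca1 Q_a1 SP using ca1 dA uB vB ab b0n a1 b0B pi_eq pi_inj pi_ne R_pi piB
        by (auto simp: p_A[OF dA] e_def iA_def iB_def field_simps)
    next
      case db0
      have vB: "True" by simp
      show ?thesis unfolding ca1 Q_a1 SP using ca1 db0 uB vB ab b0n a1 b0B pi_eq pi_inj pi_ne R_pi piB
        by (auto simp: p_b0 e_def iA_def iB_def field_simps)
    next
      case dR
      have vB: "v \<in> B" "pi v \<in> B" "v \<notin> A" "pi v \<notin> A" "pi v \<notin> R" "v \<noteq> a1" using dR RB piB notBA R_pi a1 by auto
      show ?thesis unfolding ca1 Q_a1 SP using ca1 dR uB vB ab b0n a1 b0B pi_eq pi_inj pi_ne R_pi piB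
        by (auto simp: p_R[OF dR] e_def iA_def iB_def field_simps)
    next
      case dBR
      have vB: "v \<in> B" "pi v \<in> B" "v \<notin> A" "pi v \<notin> A" "pi v \<in> R" "v \<noteq> a1" "v \<noteq> b0" using dBR RB piB notBA R_pi a1 b0 by auto
      show ?thesis unfolding ca1 Q_a1 SP using ca1 dBR uB vB ab b0n a1 b0B pi_eq pi_inj pi_ne R_pi piB
        by (auto simp: p_BR[OF dBR] e_def iA_def iB_def field_simps)
    qed
  next
    case cA
    have uB: "u \<notin> B" "u \<noteq> b0" using cA notBA b0B by auto
    consider (da1) "v = a1" | (dA) "v \<in> A" "v \<noteq> a1" | (db0) "v = b0" | (dR) "v \<in> R" "v \<noteq> b0"
      | (dBR) "v \<in> B" "v \<notin> R" using v V_def by auto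
    then show ?thesis
    proof cases
      case da1
      have vB: "True" by simp
      show ?thesis unfolding Q_A[OF cA] SP using cA da1 uB vB ab b0n a1 b0B pi_eq pi_inj pi_ne R_pi piB
        by (auto simp: p_a1 e_def iA_def iB_def field_simps)
    next
      case dA
      have vB: "v \<notin> B" "v \<noteq> b0" using dA notBA b0B by auto
      show ?thesis unfolding Q_A[OF cA] SP using cA dA uB vB ab b0n a1 b0B pi_eq pi_inj pi_ne R_pi piB
        by (auto simp: p_A[OF dA] e_def iA_def iB_def field_simps)
    next
      case db0
      have vB: "True" by simp
      show ?thesis unfolding Q_A[OF cA] SP using cA db0 uB vB ab b0n a1 b0B pi_eq pi_inj pi_ne R_pi piB
        by (auto simp: p_b0 e_def iA_def iB_def field_simps)
    next
      case dR
      have vB: "v \<in> B" "pi v \<in> B" "v \<notin> A" "pi v \<notin> A" "pi v \<notin> R" "v \<noteq> a1" using dR RB piB notBA R_pi a1 by auto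
      show ?thesis unfolding Q_A[OF cA] SP using cA dR uB vB ab b0n a1 b0B pi_eq pi_inj pi_ne R_pi piB
        by (auto simp: p_R[OF dR] e_def iA_def iB_def field_simps)
    next
      case dBR
      have vB: "v \<in> B" "pi v \<in> B" "v \<notin> A" "pi v \<notin> A" "pi v \<in> R" "v \<noteq> a1" "v \<noteq> b0" using dBR RB piB notBA R_pi a1 b0 by auto
      show ?thesis unfolding Q_A[OF cA] SP using cA dBR uB vB ab b0n a1 b0B pi_eq pi_inj pi_ne R_pi piB
        by (auto simp: p_BR[OF dBR] e_def iA_def iB_def field_simps)
    qed
  next
    case cb0
    have uB: "True" by simp
    consider (da1) "v = a1" | (dA) "v \<in> A" "v \<noteq> a1" | (db0) "v = b0" | (dR) "v \<in> R" "v \<noteq> b0"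
      | (dBR) "v \<in> B" "v \<notin> R" using v V_def by auto
    then show ?thesis
    proof cases
      case da1
      have vB: "True" by simp
      show ?thesis unfolding cb0 Q_b0 SP using cb0 da1 uB vB ab b0n a1 b0B pi_eq pi_inj pi_ne R_pi piB
        by (auto simp: p_a1 e_def iA_def iB_def field_simps)
    next
      case dA
      have vB: "v \<notin> B" "v \<noteq> b0" using dA notBA b0B by auto
      show ?thesis unfolding cb0 Q_b0 SP using cb0 dA uB vB ab b0n a1 b0B pi_eq pi_inj pi_ne R_pi piB
        by (auto simp: p_A[OF dA] e_def iA_def iB_def field_simps)
    next
      case db0
      have vB: "True" by simp
      show ?thesis unfolding cb0 Q_b0 SP using cb0 db0 uB vB ab b0n a1 b0B pi_eq pi_inj pi_ne R_pi piB
        by (auto simp: p_b0 e_def iA_def iB_def field_simps)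
    next
      case dR
      have vB: "v \<in> B" "pi v \<in> B" "v \<notin> A" "pi v \<notin> A" "pi v \<notin> R" "v \<noteq> a1" using dR RB piB notBA R_pi a1 by auto
      show ?thesis unfolding cb0 Q_b0 SP using cb0 dR uB vB ab b0n a1 b0B pi_eq pi_inj pi_ne R_pi piB
        by (auto simp: p_R[OF dR] e_def iA_def iB_def field_simps)
    next
      case dBR
      have vB: "v \<in> B" "pi v \<in> B" "v \<notin> A" "pi v \<notin> A" "pi v \<in> R" "v \<noteq> a1" "v \<noteq> b0" using dBR RB piB notBA R_pi a1 b0 by auto
      show ?thesis unfolding cb0 Q_b0 SP using cb0 dBR uB vB ab b0n a1 b0B pi_eq pi_inj pi_ne R_pi piB
        by (auto simp: p_BR[OF dBR] e_def iA_def iB_def field_simps)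
    qed
  next
    case cR
    have uB: "u \<in> B" "pi u \<in> B" "u \<notin> A" "pi u \<notin> A" "pi u \<notin> R" "u \<noteq> a1" "u \<noteq> pi u" using cR RB piB notBA R_pi a1 pi_ne[of u, symmetric] by auto
    consider (da1) "v = a1" | (dA) "v \<in> A" "v \<noteq> a1" | (db0) "v = b0" | (dR) "v \<in> R" "v \<noteq> b0"
      | (dBR) "v \<in> B" "v \<notin> R" using v V_def by auto
    then show ?thesis
    proof cases
      case da1
      have vB: "True" by simp
      show ?thesis unfolding Q_R[OF cR] SP using cR da1 uB vB ab b0n a1 b0B pi_eq pi_inj pi_ne R_pi piB
        by (auto simp: p_a1 e_def iA_def iB_def field_simps)
    next
      case dA
      have vB: "v \<notin> B" "v \<noteq> b0" using dA notBA b0B by auto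
      show ?thesis unfolding Q_R[OF cR] SP using cR dA uB vB ab b0n a1 b0B pi_eq pi_inj pi_ne R_pi piB
        by (auto simp: p_A[OF dA] e_def iA_def iB_def field_simps)
    next
      case db0
      have vB: "True" by simp
      show ?thesis unfolding Q_R[OF cR] SP using cR db0 uB vB ab b0n a1 b0B pi_eq pi_inj pi_ne R_pi piB
        by (auto simp: p_b0 e_def iA_def iB_def field_simps)
    next
      case dR
      have vB: "v \<in> B" "pi v \<in> B" "v \<notin> A" "pi v \<notin> A" "pi v \<notin> R" "v \<noteq> a1" using dR RB piB notBA R_pi a1 by auto
      show ?thesis unfolding Q_R[OF cR] SP using cR dR uB vB ab b0n a1 b0B pi_eq pi_inj pi_ne R_pi piB
        by (auto simp: p_R[OF dR] e_def iA_def iB_def field_simps)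
    next
      case dBR
      have vB: "v \<in> B" "pi v \<in> B" "v \<notin> A" "pi v \<notin> A" "pi v \<in> R" "v \<noteq> a1" "v \<noteq> b0" using dBR RB piB notBA R_pi a1 b0 by auto
      show ?thesis unfolding Q_R[OF cR] SP using cR dBR uB vB ab b0n a1 b0B pi_eq pi_inj pi_ne R_pi piB
        by (auto simp: p_BR[OF dBR] e_def iA_def iB_def field_simps)
    qed
  next
    case cBR
    have uB: "u \<in> B" "pi u \<in> B" "u \<notin> A" "pi u \<notin> A" "pi u \<in> R" "u \<noteq> a1" "u \<noteq> b0" "u \<noteq> pi u" using cBR RB piB notBA R_pi a1 pi_ne[of u, symmetric] b0 by auto
    consider (da1) "v = a1" | (dA) "v \<in> A" "v \<noteq> a1" | (db0) "v = b0" | (dR) "v \<in> R" "v \<noteq> b0"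
      | (dBR) "v \<in> B" "v \<notin> R" using v V_def by auto
    then show ?thesis
    proof cases
      case da1
      have vB: "True" by simp
      show ?thesis unfolding Q_BR[OF cBR] SP using cBR da1 uB vB ab b0n a1 b0B pi_eq pi_inj pi_ne R_pi piB
        by (auto simp: p_a1 e_def iA_def iB_def field_simps)
    next
      case dA
      have vB: "v \<notin> B" "v \<noteq> b0" using dA notBA b0B by auto
      show ?thesis unfolding Q_BR[OF cBR] SP using cBR dA uB vB ab b0n a1 b0B pi_eq pi_inj pi_ne R_pi piB
        by (auto simp: p_A[OF dA] e_def iA_def iB_def field_simps)
    next
      case db0
      have vB: "True" by simp
      show ?thesis unfolding Q_BR[OF cBR] SP using cBR db0 uB vB ab b0n a1 b0B pi_eq pi_inj pi_ne R_pi piB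
        by (auto simp: p_b0 e_def iA_def iB_def field_simps)
    next
      case dR
      have vB: "v \<in> B" "pi v \<in> B" "v \<notin> A" "pi v \<notin> A" "pi v \<notin> R" "v \<noteq> a1" using dR RB piB notBA R_pi a1 by auto
      show ?thesis unfolding Q_BR[OF cBR] SP using cBR dR uB vB ab b0n a1 b0B pi_eq pi_inj pi_ne R_pi piB
        by (auto simp: p_R[OF dR] e_def iA_def iB_def field_simps)
    next
      case dBR
      have vB: "v \<in> B" "pi v \<in> B" "v \<notin> A" "pi v \<notin> A" "pi v \<in> R" "v \<noteq> a1" "v \<noteq> b0" using dBR RB piB notBA R_pi a1 b0 by auto
      show ?thesis unfolding Q_BR[OF cBR] SP using cBR dBR uB vB ab b0n a1 b0B pi_eq pi_inj pi_ne R_pi piB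
        by (auto simp: p_BR[OF dBR] e_def iA_def iB_def field_simps)
    qed
  qed
qed

lemma prod_lam: "(\<Prod>u\<in>V. [:- lam u, 1:]) = [:- 0, 1:] * [:- (2*\<alpha>+\<beta>), 1:] ^ (card A - 1)
    * [:- (\<alpha>+\<beta>), 1:] ^ card R * [:- (\<alpha>+\<beta>+2), 1:] ^ (card B - card R)"
proof -
  let ?f = "\<lambda>u. [:- lam u, 1:]"
  have finR: "finite R" using RB finB finite_subset by auto
  have 1: "(\<Prod>u\<in>V. ?f u) = (\<Prod>u\<in>A. ?f u) * (\<Prod>u\<in>B. ?f u)"
    unfolding V_def by (rule prod.union_disjoint) (use finA finB disj in auto)
  have 2: "(\<Prod>u\<in>A. ?f u) = ?f a1 * (\<Prod>u\<in>A - {a1}. ?f u)"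
    using prod.remove[OF finA a1] .
  have 3: "(\<Prod>u\<in>A - {a1}. ?f u) = [:- (2*\<alpha>+\<beta>), 1:] ^ (card A - 1)"
  proof -
    have "(\<Prod>u\<in>A - {a1}. ?f u) = (\<Prod>u\<in>A - {a1}. [:- (2*\<alpha>+\<beta>), 1:])"
      by (rule prod.cong) (auto simp: lam_simps)
    also have "\<dots> = [:- (2*\<alpha>+\<beta>), 1:] ^ (card A - 1)" using a1 finA by simp
    finally show ?thesis .
  qed
  have 4: "(\<Prod>u\<in>B. ?f u) = (\<Prod>u\<in>B - R. ?f u) * (\<Prod>u\<in>R. ?f u)"
    using prod.subset_diff[OF RB finB] .
  have 5: "(\<Prod>u\<in>B - R. ?f u) = [:- (\<alpha>+\<beta>+2), 1:] ^ (card B - card R)"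
  proof -
    have "(\<Prod>u\<in>B - R. ?f u) = (\<Prod>u\<in>B - R. [:- (\<alpha>+\<beta>+2), 1:])"
      by (rule prod.cong) (auto simp: lam_simps)
    also have "\<dots> = [:- (\<alpha>+\<beta>+2), 1:] ^ (card B - card R)"
      using RB finR by (simp add: card_Diff_subset)
    finally show ?thesis .
  qed
  have 6: "(\<Prod>u\<in>R. ?f u) = [:- (\<alpha>+\<beta>), 1:] ^ card R"
  proof -
    have "(\<Prod>u\<in>R. ?f u) = ?f b0 * (\<Prod>u\<in>R - {b0}. ?f u)"
      using prod.remove[OF finR b0] .
    also have "(\<Prod>u\<in>R - {b0}. ?f u) = (\<Prod>u\<in>R - {b0}. [:- (\<alpha>+\<beta>), 1:])"
      by (rule prod.cong) (auto simp: lam_simps)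
    also have "\<dots> = [:- (\<alpha>+\<beta>), 1:] ^ (card R - 1)" using b0 finR by simp
    also have "?f b0 = [:- (\<alpha>+\<beta>), 1:]" by (simp add: lam_simps)
    also have "[:- (\<alpha>+\<beta>), 1:] * [:- (\<alpha>+\<beta>), 1:] ^ (card R - 1) = [:- (\<alpha>+\<beta>), 1:] ^ card R"
    proof -
      have "card R \<noteq> 0" using b0 finR by auto
      then obtain k where "card R = Suc k" by (cases "card R") auto
      thus ?thesis by simp
    qed
    finally show ?thesis .
  qed
  have 7: "?f a1 = [:- 0, 1:]" by (simp add: lam_simps)
  show ?thesis unfolding 1 2 3 4 5 6 7 by (simp only: mult_ac)
qed
lemma least_dist:
  assumes Ech: "\<And>x y. x \<in> V \<Longrightarrow> y \<in> V \<Longrightarrow> ((x, y) \<in> E) = (x \<noteq> y \<and> \<not> (x \<in> A \<and> y \<in> A) \<and> \<not> (x \<in> B \<and> y \<in> B \<and> y = pi x))"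
    and x: "x \<in> V" and y: "y \<in> V"
  shows "real (LEAST k. (x, y) \<in> E ^^ k) = d x y"
proof -
  have b0V: "b0 \<in> V" and a1V: "a1 \<in> V" using b0B a1 V_def by auto
  show ?thesis
  proof (cases "x = y")
    case True
    have "(LEAST k. (x, y) \<in> E ^^ k) = 0" by (rule Least_equality) (use True in auto)
    thus ?thesis using True d_def by simp
  next
    case False
    show ?thesis
    proof (cases "(x, y) \<in> E")
      case True
      have "(LEAST k. (x, y) \<in> E ^^ k) = 1"
      proof (rule Least_equality)
        show "(x, y) \<in> E ^^ 1" using True by simp
        fix k assume "(x, y) \<in> E ^^ k"
        thus "1 \<le> k" using False by (cases k) auto
      qed
      moreover have "d x y = 1" using True Ech[OF x y] unfolding d_def by auto
      ultimately show ?thesis by simp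
    next
      case nE: False
      obtain w where w: "(x, w) \<in> E" "(w, y) \<in> E"
      proof (cases "x \<in> A")
        case True
        hence yA: "y \<in> A" using nE Ech[OF x y] False x y V_def notAB notBA by auto
        show ?thesis
          by (rule that[of b0]) (use True yA Ech x y b0V b0B notBA in \<open>auto\<close>)
      next
        case xA: False
        hence xB: "x \<in> B" using x V_def by auto
        hence yB: "y \<in> B" "y = pi x" using nE Ech[OF x y] False x y V_def notAB notBA by auto
        show ?thesis
          by (rule that[of a1]) (use xB yB Ech x y a1V a1 notBA notAB in \<open>auto\<close>)
      qed
      have "(LEAST k. (x, y) \<in> E ^^ k) = 2"
      proof (rule Least_equality)
        have "(x, w) \<in> E ^^ 1" using w by simp
        thus "(x, y) \<in> E ^^ 2" using w(2) by (auto simp: numeral_2_eq_2)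
        fix k assume "(x, y) \<in> E ^^ k"
        thus "2 \<le> k" using False nE
          by (cases k; cases "k - 1") auto
      qed
      moreover have "d x y = 2" using nE False Ech[OF x y] unfolding d_def by auto
      ultimately show ?thesis by simp
    qed
  qed
qed

end


lemma pow_split: "n \<ge> 4 \<Longrightarrow> (2::'a::comm_semiring_1) ^ (n - 1) = 2 * 2 ^ (n - 2)"
proof -
  assume "n \<ge> 4"
  then obtain k where "n = k + 4" by (metis add.commute le_iff_add)
  thus ?thesis by (simp add: numeral_eq_Suc)
qed

lemma h_ge4: "n \<ge> 4 \<Longrightarrow> (4::nat) \<le> 2 ^ (n - 2)"
proof -
  assume "n \<ge> 4"
  hence "(2::nat) ^ 2 \<le> 2 ^ (n - 2)" by (intro power_increasing) auto
  thus ?thesis by simp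
qed

lemma key_dvd:
  fixes d :: int
  assumes n: "n \<ge> 4"
  shows "(2 * 2 ^ (n - 2) dvd d * (2 ^ (n - 2) - 2)) = (2 ^ (n - 2) dvd d)"
proof -
  define g :: int where "g = 2 ^ (n - 3)"
  obtain k where k: "n = k + 4" using n by (metis add.commute le_iff_add)
  have h: "(2::int) ^ (n - 2) = 2 * g" unfolding g_def k by (simp add: numeral_eq_Suc)
  have ev: "even g" unfolding g_def k by (simp add: numeral_eq_Suc)
  have cop: "coprime ((2::int) ^ (n - 2)) (g - 1)" using ev by simp
  have "(2 * 2 ^ (n - 2) dvd d * (2 ^ (n - 2) - 2)) = (2 * 2 ^ (n - 2) dvd 2 * (d * (g - 1)))"
    unfolding h by (simp add: algebra_simps)
  also have "\<dots> = (2 ^ (n - 2) dvd d * (g - 1))" by (simp only: mult_dvd_mono dvd_mult_cancel_left zero_neq_numeral) simp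
  also have "\<dots> = (2 ^ (n - 2) dvd d)" using coprime_dvd_mult_left_iff[OF cop] by simp
  finally show ?thesis .
qed

lemma nat_mod_eq_int: "((x::nat) mod N = y mod N) = (int N dvd int x - int y)"
  by (metis mod_eq_dvd_iff of_nat_eq_iff of_nat_mod)

lemma dvd_lt2: "(h::nat) > 0 \<Longrightarrow> i < 2 * h \<Longrightarrow> (h dvd i) = (i = 0 \<or> i = h)"
proof
  assume "h > 0" "i < 2 * h" "h dvd i"
  then obtain c where c: "i = h * c" by auto
  with \<open>i < 2 * h\<close> \<open>h > 0\<close> have "c < 2" by (metis mult.commute mult_less_cancel2)
  hence "c = 0 \<or> c = 1" by auto
  thus "i = 0 \<or> i = h" using c by auto
qed auto

lemma dvd_diff_lt2: fixes h i k :: int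
  assumes "h > 0" "0 \<le> i" "i < 2 * h" "0 \<le> k" "k < 2 * h"
  shows "(h dvd i - k) = (i = k \<or> i = k + h \<or> k = i + h)"
proof
  assume "h dvd i - k"
  then obtain c where c: "i - k = h * c" by auto
  have "h * c < h * 2" using c assms by linarith
  hence c1: "c < 2" using assms(1) by (simp add: mult_less_cancel_left_pos)
  have "h * (-2) < h * c" using c assms by linarith
  hence c2: "-2 < c" using mult_less_cancel_left_pos[OF assms(1), of "-2" c] by blast
  have "c = -1 \<or> c = 0 \<or> c = 1" using c1 c2 by auto
  thus "i = k \<or> i = k + h \<or> k = i + h" using c by auto
next
  assume "i = k \<or> i = k + h \<or> k = i + h"
  thus "h dvd i - k" by auto
qed

lemma qd_comm:
  assumes n: "n \<ge> 4" and i: "i < 2 ^ (n - 1)" and k: "k < 2 ^ (n - 1)" and j: "j < 2" and l: "l < 2"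
  shows "(qd_mult n (i, j) (k, l) = qd_mult n (k, l) (i, j)) =
    (if j = 0 then (if l = 0 then True else i = 0 \<or> i = 2 ^ (n - 2))
     else (if l = 0 then k = 0 \<or> k = 2 ^ (n - 2) else k = i \<or> k = (i + 2 ^ (n - 2)) mod 2 ^ (n - 1)))"
proof -
  define h :: nat where "h = 2 ^ (n - 2)"
  have N: "(2::nat) ^ (n - 1) = 2 * h" unfolding h_def using pow_split[OF n] .
  have h4: "h \<ge> 4" unfolding h_def using h_ge4[OF n] .
  have hi: "int h = 2 ^ (n - 2)" unfolding h_def by simp
  have key: "(2 * int h dvd d * (int h - 2)) = (int h dvd d)" for d
    using key_dvd[OF n, of d] unfolding h_def by simp
  have hm: "int (h - 1) = int h - 1" using h4 by simp
  have i': "i < 2 * h" and k': "k < 2 * h" using i k N by auto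
  have c01: "((i + k) mod (2*h) = (k + i * (h - 1)) mod (2*h)) = (i = 0 \<or> i = h)"
    if "i < 2 * h" for i k :: nat
  proof -
    have "((i + k) mod (2*h) = (k + i * (h - 1)) mod (2*h))
        = (int (2*h) dvd int (i + k) - int (k + i * (h - 1)))" by (rule nat_mod_eq_int)
    also have "int (i + k) - int (k + i * (h - 1)) = - (int i * (int h - 2))"
      by (simp only: of_nat_add of_nat_mult hm) (simp add: algebra_simps)
    also have "(int (2*h) dvd - (int i * (int h - 2))) = (int h dvd int i)"
      using key by simp
    also have "\<dots> = (h dvd i)" by simp
    also have "\<dots> = (i = 0 \<or> i = h)" using dvd_lt2[of h i] h4 that by simp
    finally show ?thesis .
  qed
  have c11: "((i + k * (h - 1)) mod (2*h) = (k + i * (h - 1)) mod (2*h)) = (k = i \<or> k = (i + h) mod (2*h))"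
    if "i < 2 * h" "k < 2 * h" for i k :: nat
  proof -
    have "((i + k * (h - 1)) mod (2*h) = (k + i * (h - 1)) mod (2*h))
        = (int (2*h) dvd int (i + k * (h - 1)) - int (k + i * (h - 1)))" by (rule nat_mod_eq_int)
    also have "int (i + k * (h - 1)) - int (k + i * (h - 1)) = - ((int i - int k) * (int h - 2))"
      by (simp only: of_nat_add of_nat_mult hm) (simp add: algebra_simps)
    also have "(int (2*h) dvd - ((int i - int k) * (int h - 2))) = (int h dvd int i - int k)"
      using key by simp
    also have "\<dots> = (int i = int k \<or> int i = int k + int h \<or> int k = int i + int h)"
      by (rule dvd_diff_lt2) (use that h4 in auto)
    also have "\<dots> = (k = i \<or> k = (i + h) mod (2*h))"
    proof (cases "i < h")
      case True
      hence "(i + h) mod (2*h) = i + h" by simp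
      thus ?thesis using True that by auto
    next
      case False
      hence "(i + h) mod (2*h) = i - h" using that
        by (simp add: le_mod_geq mod_less)
      thus ?thesis using False that by auto
    qed
    finally show ?thesis .
  qed
  have m: "qd_mult n (a, b) (c, e) = ((a + c * (h - 1) ^ b) mod (2 * h), (b + e) mod 2)" for a b c e
    unfolding qd_mult_def N h_def by simp
  consider "j = 0" "l = 0" | "j = 0" "l = 1" | "j = 1" "l = 0" | "j = 1" "l = 1" using j l by linarith
  then show ?thesis
  proof cases
    case 1 thus ?thesis unfolding m by (simp add: add.commute)
  next
    case 2 thus ?thesis unfolding m using c01[OF i', of k] by (simp add: h_def)
  next
    case 3 thus ?thesis unfolding m using c01[OF k', of i] by (auto simp: h_def)
  next
    case 4 thus ?thesis unfolding m N using c11[OF i' k'] by (simp add: h_def)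
  qed
qed



definition "qA n = {(i, j). j = (0::nat) \<and> 0 < i \<and> i < (2::nat) ^ (n - 1) \<and> i \<noteq> 2 ^ (n - 2)}"
definition "qB n = {(i, j). j = (1::nat) \<and> i < (2::nat) ^ (n - 1)}"
definition "qR n = {(i, j). j = (1::nat) \<and> i < (2::nat) ^ (n - 2)}"
definition "qpi n x = ((fst x + 2 ^ (n - 2)) mod 2 ^ (n - 1), snd x)"

lemma mod_shift: "i < 2 * h \<Longrightarrow> (i + h) mod (2 * h) = (if i < h then i + h else i - (h::nat))"
  by (auto simp: le_mod_geq mod_less)

lemma qd_ncg: assumes n: "n \<ge> 4" shows "ncg (qA n) (qB n) (qR n) (qpi n) (1, 0) (0, 1)"
proof -
  define h :: nat where "h = 2 ^ (n - 2)"
  have N: "(2::nat) ^ (n - 1) = 2 * h" unfolding h_def using pow_split[OF n] .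
  have h4: "h \<ge> 4" unfolding h_def using h_ge4[OF n] .
  have A: "qA n = {(i, j). j = 0 \<and> 0 < i \<and> i < 2 * h \<and> i \<noteq> h}" unfolding qA_def N h_def ..
  have B: "qB n = {(i, j). j = 1 \<and> i < 2 * h}" unfolding qB_def N ..
  have R: "qR n = {(i, j). j = 1 \<and> i < h}" unfolding qR_def h_def ..
  have P: "qpi n x = (if fst x < 2 * h then (if fst x < h then fst x + h else fst x - h) else (fst x + h) mod (2 * h), snd x)" for x
    unfolding qpi_def N h_def[symmetric] using mod_shift[of "fst x" h] by auto
  show ?thesis
  proof
    show "finite (qA n)" unfolding A by (rule finite_subset[of _ "{..<2*h} \<times> {0}"]) auto
    show "finite (qB n)" unfolding B by (rule finite_subset[of _ "{..<2*h} \<times> {1}"]) auto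
  qed (use h4 in \<open>auto simp: A B R P\<close>)
qed

lemma qd_V: assumes n: "n \<ge> 4"
  shows "nc_vertices (qd_carrier n) (qd_mult n) = qA n \<union> qB n"
proof -
  define h :: nat where "h = 2 ^ (n - 2)"
  have N: "(2::nat) ^ (n - 1) = 2 * h" unfolding h_def using pow_split[OF n] .
  have h4: "h \<ge> 4" unfolding h_def using h_ge4[OF n] .
  have C: "qd_carrier n = {(i, j). i < 2 * h \<and> j < 2}" unfolding qd_carrier_def N ..
  have comm: "(qd_mult n (i, j) (k, l) = qd_mult n (k, l) (i, j)) =
    (if j = 0 then (if l = 0 then True else i = 0 \<or> i = h)
     else (if l = 0 then k = 0 \<or> k = h else k = i \<or> k = (i + h) mod (2 * h)))"
    if "i < 2 * h" "k < 2 * h" "j < 2" "l < 2" for i j k l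
    using qd_comm[OF n, of i k j l] that unfolding N h_def by simp
  have cen: "(i, j) \<in> centre (qd_carrier n) (qd_mult n) \<longleftrightarrow> i < 2 * h \<and> j < 2 \<and> j = 0 \<and> (i = 0 \<or> i = h)"
    for i j
  proof
    assume a: "(i, j) \<in> centre (qd_carrier n) (qd_mult n)"
    hence ij: "i < 2 * h" "j < 2" unfolding centre_def C by auto
    have all: "\<forall>g\<in>qd_carrier n. qd_mult n (i, j) g = qd_mult n g (i, j)" using a unfolding centre_def by auto
    show "i < 2 * h \<and> j < 2 \<and> j = 0 \<and> (i = 0 \<or> i = h)"
    proof (cases "j = 0")
      case True
      have "(0, 1) \<in> qd_carrier n" using h4 unfolding C by auto
      hence "qd_mult n (i, j) (0, 1) = qd_mult n (0, 1) (i, j)" using all by auto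
      hence "i = 0 \<or> i = h" using comm[of i 0 j 1] ij h4 True by simp
      thus ?thesis using ij True by auto
    next
      case False
      have "(1, 0) \<in> qd_carrier n" using h4 unfolding C by auto
      hence "qd_mult n (i, j) (1, 0) = qd_mult n (1, 0) (i, j)" using all by auto
      hence False using comm[of i 1 j 0] ij h4 False by simp
      thus ?thesis ..
    qed
  next
    assume a: "i < 2 * h \<and> j < 2 \<and> j = 0 \<and> (i = 0 \<or> i = h)"
    show "(i, j) \<in> centre (qd_carrier n) (qd_mult n)"
      unfolding centre_def
    proof (intro CollectI conjI ballI)
      show "(i, j) \<in> qd_carrier n" using a unfolding C by auto
      fix g assume "g \<in> qd_carrier n"
      then obtain k l where g: "g = (k, l)" "k < 2 * h" "l < 2" unfolding C by auto
      show "qd_mult n (i, j) g = qd_mult n g (i, j)" using comm[of i k j l] a g by auto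
    qed
  qed
  show ?thesis
  proof (rule Set.set_eqI)
    fix x :: "nat \<times> nat"
    obtain i j where x: "x = (i, j)" by fastforce
    show "x \<in> nc_vertices (qd_carrier n) (qd_mult n) \<longleftrightarrow> x \<in> qA n \<union> qB n"
      unfolding x nc_vertices_def using cen[of i j] unfolding C qA_def qB_def N h_def[symmetric]
      by auto
  qed
qed

lemma qd_E: assumes n: "n \<ge> 4" and x: "x \<in> qA n \<union> qB n" and y: "y \<in> qA n \<union> qB n"
  shows "((x, y) \<in> nc_edges (qd_carrier n) (qd_mult n)) =
     (x \<noteq> y \<and> \<not> (x \<in> qA n \<and> y \<in> qA n) \<and> \<not> (x \<in> qB n \<and> y \<in> qB n \<and> y = qpi n x))"
proof -
  define h :: nat where "h = 2 ^ (n - 2)"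
  have N: "(2::nat) ^ (n - 1) = 2 * h" unfolding h_def using pow_split[OF n] .
  have h4: "h \<ge> 4" unfolding h_def using h_ge4[OF n] .
  have comm: "(qd_mult n (i, j) (k, l) = qd_mult n (k, l) (i, j)) =
    (if j = 0 then (if l = 0 then True else i = 0 \<or> i = h)
     else (if l = 0 then k = 0 \<or> k = h else k = i \<or> k = (i + h) mod (2 * h)))"
    if "i < 2 * h" "k < 2 * h" "j < 2" "l < 2" for i j k l
    using qd_comm[OF n, of i k j l] that unfolding N h_def by simp
  obtain i j where xi: "x = (i, j)" by fastforce
  obtain k l where yk: "y = (k, l)" by fastforce
  have A: "qA n = {(i, j). j = 0 \<and> 0 < i \<and> i < 2 * h \<and> i \<noteq> h}" unfolding qA_def N h_def ..
  have B: "qB n = {(i, j). j = 1 \<and> i < 2 * h}" unfolding qB_def N ..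
  have P: "qpi n (i, j) = ((i + h) mod (2 * h), j)" unfolding qpi_def N h_def by simp
  have xs: "i < 2 * h" "j < 2" "j = 0 \<longrightarrow> (0 < i \<and> i \<noteq> h)" using x unfolding xi A B by auto
  have ys: "k < 2 * h" "l < 2" "l = 0 \<longrightarrow> (0 < k \<and> k \<noteq> h)" using y unfolding yk A B by auto
  have "((x, y) \<in> nc_edges (qd_carrier n) (qd_mult n)) = (x \<noteq> y \<and> qd_mult n x y \<noteq> qd_mult n y x)"
    using x y unfolding nc_edges_def qd_V[OF n] by auto
  also have "\<dots> = (x \<noteq> y \<and> \<not> (x \<in> qA n \<and> y \<in> qA n) \<and> \<not> (x \<in> qB n \<and> y \<in> qB n \<and> y = qpi n x))"
    unfolding xi yk P using comm[OF xs(1) ys(1) xs(2) ys(2)] xs ys unfolding A B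
    by (cases "j = 0"; cases "l = 0") auto
  finally show ?thesis .
qed

lemma card_qA: assumes n: "n \<ge> 4" shows "card (qA n) = 2 ^ (n - 1) - 2"
proof -
  define h :: nat where "h = 2 ^ (n - 2)"
  have N: "(2::nat) ^ (n - 1) = 2 * h" unfolding h_def using pow_split[OF n] .
  have h4: "h \<ge> 4" unfolding h_def using h_ge4[OF n] .
  have "qA n = (\<lambda>i. (i, 0)) ` ({1..<2*h} - {h})" unfolding qA_def N h_def[symmetric] by auto
  moreover have "card ((\<lambda>i. (i, 0::nat)) ` ({1..<2*h} - {h})) = card ({1..<2*h} - {h})"
    by (rule card_image) (auto simp: inj_on_def)
  moreover have "card ({1..<2*h} - {h}) = 2 * h - 2" using h4 by simp
  ultimately show ?thesis unfolding N by simp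
qed

lemma card_qB: "card (qB n) = 2 ^ (n - 1)"
proof -
  have "qB n = (\<lambda>i. (i, 1)) ` {..<2 ^ (n - 1)}" unfolding qB_def by auto
  moreover have "card ((\<lambda>i. (i, 1::nat)) ` {..<(2::nat) ^ (n - 1)}) = card {..<(2::nat) ^ (n - 1)}"
    by (rule card_image) (auto simp: inj_on_def)
  ultimately show ?thesis by simp
qed

lemma card_qR: "card (qR n) = 2 ^ (n - 2)"
proof -
  have "qR n = (\<lambda>i. (i, 1)) ` {..<2 ^ (n - 2)}" unfolding qR_def by auto
  moreover have "card ((\<lambda>i. (i, 1::nat)) ` {..<(2::nat) ^ (n - 2)}) = card {..<(2::nat) ^ (n - 2)}"
    by (rule card_image) (auto simp: inj_on_def)
  ultimately show ?thesis by simp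
qed

theorem theorem4p2:
  fixes n :: nat
  assumes "n \<ge> 4"
  shows "char_poly (dist_laplacian (qd_carrier n) (qd_mult n)) =
           [:0, 1:]
         * [:- (2 ^ n - 2), 1:] ^ (2 ^ (n - 2))
         * [:- (2 ^ n), 1:] ^ (2 ^ (n - 2))
         * [:- (2 ^ n + 2 ^ (n - 1) - 4), 1:] ^ (2 ^ (n - 1) - 3)"
proof -
  note n = assms
  interpret Q: ncg "qA n" "qB n" "qR n" "qpi n" "(1, 0)" "(0, 1)" by (rule qd_ncg[OF n])
  let ?G = "qd_carrier n" and ?op = "qd_mult n"
  have V: "nc_vertices ?G ?op = Q.V" unfolding Q.V_def by (rule qd_V[OF n])
  have dist: "real (nc_dist ?G ?op x y) = Q.d x y" if "x \<in> Q.V" "y \<in> Q.V" for x y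
    unfolding nc_dist_def
    by (rule Q.least_dist) (use that qd_E[OF n] Q.V_def in auto)
  have trans: "real (transmission ?G ?op x) = Q.T x" if "x \<in> Q.V" for x
  proof -
    have "real (transmission ?G ?op x) = (\<Sum>u\<in>Q.V. real (nc_dist ?G ?op u x))"
      unfolding transmission_def V by simp
    also have "\<dots> = (\<Sum>u\<in>Q.V. Q.d u x)" by (rule sum.cong) (use dist that in auto)
    also have "\<dots> = Q.T x" by (rule Q.sum_d[OF that])
    finally show ?thesis .
  qed
  define vs where "vs = sorted_list_of_set Q.V"
  have setvs: "set vs = Q.V" and dvs: "distinct vs" unfolding vs_def using Q.finV by auto
  have M: "dist_laplacian ?G ?op = mat (length vs) (length vs) (\<lambda>(i, j). Q.F (vs ! i) (vs ! j))"
  proof -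
    have "dist_laplacian ?G ?op = mat (length vs) (length vs)
      (\<lambda>(i, j). (if i = j then real (transmission ?G ?op (vs ! i)) else 0) - real (nc_dist ?G ?op (vs ! i) (vs ! j)))"
      unfolding dist_laplacian_def V vs_def Let_def ..
    also have "\<dots> = mat (length vs) (length vs) (\<lambda>(i, j). Q.F (vs ! i) (vs ! j))"
    proof (rule eq_matI)
      fix i j assume "i < dim_row (mat (length vs) (length vs) (\<lambda>(i, j). Q.F (vs ! i) (vs ! j)))"
        "j < dim_col (mat (length vs) (length vs) (\<lambda>(i, j). Q.F (vs ! i) (vs ! j)))"
      hence ij: "i < length vs" "j < length vs" by auto
      hence inV: "vs ! i \<in> Q.V" "vs ! j \<in> Q.V" using setvs nth_mem by blast+
      have eq: "(vs ! i = vs ! j) = (i = j)" using dvs ij by (simp add: nth_eq_iff_index_eq)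
      show "mat (length vs) (length vs)
        (\<lambda>(i, j). (if i = j then real (transmission ?G ?op (vs ! i)) else 0) - real (nc_dist ?G ?op (vs ! i) (vs ! j))) $$ (i, j)
        = mat (length vs) (length vs) (\<lambda>(i, j). Q.F (vs ! i) (vs ! j)) $$ (i, j)"
        using ij inV eq trans dist unfolding Q.F_def by auto
    qed auto
    finally show ?thesis .
  qed
  have cp: "char_poly (dist_laplacian ?G ?op) = (\<Prod>u\<in>set vs. [:- Q.lam u, 1:])"
    by (rule char_poly_eigbasis[OF dvs M, where p = Q.p and q = Q.q and lam = Q.lam]) (use Q.eig Q.dual setvs in auto)
  also have "\<dots> = [:- 0, 1:] * [:- (2*Q.\<alpha>+Q.\<beta>), 1:] ^ (card (qA n) - 1)
    * [:- (Q.\<alpha>+Q.\<beta>), 1:] ^ card (qR n) * [:- (Q.\<alpha>+Q.\<beta>+2), 1:] ^ (card (qB n) - card (qR n))"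
    unfolding setvs by (rule Q.prod_lam)
  also have "\<dots> = [:0, 1:]
         * [:- (2 ^ n - 2), 1:] ^ (2 ^ (n - 2))
         * [:- (2 ^ n), 1:] ^ (2 ^ (n - 2))
         * [:- (2 ^ n + 2 ^ (n - 1) - 4), 1:] ^ (2 ^ (n - 1) - 3)"
  proof -
    have N: "(2::nat) ^ (n - 1) = 2 * 2 ^ (n - 2)" using pow_split[OF n] .
    have Nr: "(2::real) ^ (n - 1) = 2 * 2 ^ (n - 2)" using pow_split[OF n] .
    have nr: "(2::real) ^ n = 2 * 2 ^ (n - 1)"
      using n by (metis Suc_diff_1 dual_order.strict_trans1 power_Suc zero_less_numeral)
    have h4: "(4::nat) \<le> 2 ^ (n - 2)" using h_ge4[OF n] .
    have h4r: "(4::real) \<le> 2 ^ (n - 2)" using h4 by (metis numeral_le_iff of_nat_le_iff of_nat_numeral of_nat_power)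
    have a: "Q.\<alpha> = 2 * 2 ^ (n - 2) - 2" unfolding Q.\<alpha>_def card_qA[OF n] N using h4
      by (simp add: of_nat_diff)
    have b: "Q.\<beta> = 2 * 2 ^ (n - 2)" unfolding Q.\<beta>_def card_qB N by simp
    have e1: "2*Q.\<alpha>+Q.\<beta> = 2 ^ n + 2 ^ (n - 1) - 4" unfolding a b nr Nr by simp
    have e2: "Q.\<alpha>+Q.\<beta> = 2 ^ n - 2" unfolding a b nr Nr by simp
    have e3: "Q.\<alpha>+Q.\<beta>+2 = 2 ^ n" unfolding a b nr Nr by simp
    have c1: "card (qA n) - 1 = 2 ^ (n - 1) - 3" unfolding card_qA[OF n] by simp
    have c2: "card (qB n) - card (qR n) = 2 ^ (n - 2)" unfolding card_qB card_qR N by simp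
    show ?thesis unfolding e1 e2 e3 c1 c2 unfolding card_qR by (simp add: mult_ac)
  qed
  finally show ?thesis .
qed

end
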